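(* Let $(Y(t))_{t\in\mathbb{R}}$ be a real-valued centered stochastic process with stationary increments and finite second moments, and put $\sigma(t)^2:=\mathbb{E}\,Y(t)^2$ for $t\in\mathbb{R}$. Then for every Bernstein function $f$ there exists a real-valued stochastic process $(Z(t))_{t\in\mathbb{R}}$ whose covariance is \[ R_{f,\sigma}(s,t)=f\bigl(\sigma(s)^2+\sigma(t)^2\bigr)-f\bigl(\sigma(s-t)^2\bigr),\qquad s,t\in\mathbb{R}. \]
   Context: A Bernstein function is a function $f:[0,\infty)\to[0,\infty)$ admitting a representation $f(\lambda)=a+b\lambda+\int_0^\infty(1-e^{-x\lambda})\,\mu(dx)$ with constants $a,b\ge 0$ and a measure $\mu$ on $(0,\infty)$ with $\int\min\{x,1\}\,\mu(dx)<\infty$. "Stationary increments" is understood in the sense that $Y(0)=0$ and, for every $h\in\mathbb{R}$, the process $(Y(t+h)-Y(h))_{t\in\mathbb{R}}$ has the same finite-dimensional distributions as $(Y(t))_{t\in\mathbb{R}}$ (in particular $\mathbb{E}(Y(t)-Y(s))^2=\sigma(t-s)^2$). *)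

theory Defs
  imports "HOL-Probability.Probability"
begin

text \<open>Values of f at negative arguments are irrelevant.\<close>
definition bernstein_function :: "(real \<Rightarrow> real) \<Rightarrow> bool" where
  "bernstein_function f \<longleftrightarrow>
     (\<exists>a b (\<mu>::real measure). a \<ge> 0 \<and> b \<ge> 0 \<and>
        sets \<mu> = sets borel \<and> emeasure \<mu> {..0} = 0 \<and>
        (\<integral>\<^sup>+ x. ennreal (min x 1) \<partial>\<mu>) < \<infinity> \<and>
        (\<forall>l\<ge>0. f l = a + b * l + (\<integral>x. (1 - exp (- x * l)) \<partial>\<mu>)))"

definition stationary_increments :: "'a measure \<Rightarrow> (real \<Rightarrow> 'a \<Rightarrow> real) \<Rightarrow> bool" where
  "stationary_increments M Y \<longleftrightarrow>
     (AE \<omega> in M. Y 0 \<omega> = 0) \<and>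
     (\<forall>h. \<forall>J. finite J \<longrightarrow>
        distr M (PiM J (\<lambda>_. borel)) (\<lambda>\<omega>. \<lambda>j\<in>J. Y (j + h) \<omega> - Y h \<omega>) =
        distr M (PiM J (\<lambda>_. borel)) (\<lambda>\<omega>. \<lambda>j\<in>J. Y j \<omega>))"

definition cov_fun :: "'a measure \<Rightarrow> (real \<Rightarrow> 'a \<Rightarrow> real) \<Rightarrow> real \<Rightarrow> real \<Rightarrow> real" where
  "cov_fun N Z s t =
     (\<integral>\<omega>. (Z s \<omega> - (\<integral>\<eta>. Z s \<eta> \<partial>N)) * (Z t \<omega> - (\<integral>\<eta>. Z t \<eta> \<partial>N)) \<partial>N)"

end

theory Submission
  imports Defs
begin

lemma prodint:
  fixes M :: "'a measure" and g :: "'a \<Rightarrow> real"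
  assumes P: "prob_space M" and g: "integrable M g"
  shows "integrable (PiM UNIV (\<lambda>_::nat. M)) (\<lambda>\<omega>. \<Prod>i<k. g (\<omega> i))"
    and "(\<integral>\<omega>. (\<Prod>i<k. g (\<omega> i)) \<partial>PiM UNIV (\<lambda>_::nat. M)) = (\<integral>x. g x \<partial>M)^k"
proof -
  interpret product_prob_space "\<lambda>_::nat. M" UNIV
    by (rule product_prob_spaceI) (rule P)
  have D: "distr (PiM UNIV (\<lambda>_. M)) (PiM {..<k} (\<lambda>_. M)) (\<lambda>x. restrict x {..<k}) = PiM {..<k} (\<lambda>_. M)"
    by (rule distr_PiM_restrict_finite) auto
  have meas: "(\<lambda>x. restrict x {..<k}) \<in> measurable (PiM UNIV (\<lambda>_. M)) (PiM {..<k} (\<lambda>_::nat. M))"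
    by (rule measurable_restrict_subset) auto
  have gm[measurable]: "g \<in> borel_measurable M" using g by auto
  have fm: "(\<lambda>x. \<Prod>i\<in>{..<k}. g (x i)) \<in> borel_measurable (PiM {..<k} (\<lambda>_::nat. M))"
    by measurable
  have int: "integrable (PiM {..<k} (\<lambda>_. M)) (\<lambda>x. \<Prod>i\<in>{..<k}. g (x i))"
    by (rule product_integrable_prod) (auto intro: g)
  have eq: "\<And>x. (\<Prod>i\<in>{..<k}. g (restrict x {..<k} i)) = (\<Prod>i<k. g (x i))"
    by (auto intro!: prod.cong)
  show "integrable (PiM UNIV (\<lambda>_::nat. M)) (\<lambda>\<omega>. \<Prod>i<k. g (\<omega> i))"
  proof -
    have "integrable (distr (PiM UNIV (\<lambda>_. M)) (PiM {..<k} (\<lambda>_. M)) (\<lambda>x. restrict x {..<k})) (\<lambda>x. \<Prod>i\<in>{..<k}. g (x i))"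
      by (subst D) (rule int)
    then show ?thesis unfolding integrable_distr_eq[OF meas fm] eq .
  qed
  have "(\<integral>\<omega>. (\<Prod>i<k. g (\<omega> i)) \<partial>PiM UNIV (\<lambda>_::nat. M)) =
      (\<integral>x. (\<Prod>i\<in>{..<k}. g (x i)) \<partial>distr (PiM UNIV (\<lambda>_. M)) (PiM {..<k} (\<lambda>_. M)) (\<lambda>x. restrict x {..<k}))"
    by (subst integral_distr[OF meas fm]) (simp add: eq)
  also have "\<dots> = (\<Prod>i\<in>{..<k}. (\<integral>x. g x \<partial>M))"
    unfolding D by (rule product_integral_prod) (auto intro: g)
  finally show "(\<integral>\<omega>. (\<Prod>i<k. g (\<omega> i)) \<partial>PiM UNIV (\<lambda>_::nat. M)) = (\<integral>x. g x \<partial>M)^k"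
    by simp
qed

lemma ab_le: fixes x y :: real shows "\<bar>x*y\<bar> \<le> x\<^sup>2 + y\<^sup>2"
proof -
  have "0 \<le> (\<bar>x\<bar> - \<bar>y\<bar>)\<^sup>2" by simp
  then have "2*(\<bar>x\<bar>*\<bar>y\<bar>) \<le> \<bar>x\<bar>\<^sup>2 + \<bar>y\<bar>\<^sup>2" by (simp add: power2_eq_square algebra_simps)
  moreover have "0 \<le> \<bar>x\<bar>*\<bar>y\<bar>" by simp
  ultimately show ?thesis unfolding abs_mult power2_abs by linarith
qed

locale bsetup =
  fixes M :: "'a measure" and Y :: "real \<Rightarrow> 'a \<Rightarrow> real" and b :: real and \<mu> :: "real measure"
  assumes PM: "prob_space M"
    and Ym[measurable]: "\<And>t. Y t \<in> borel_measurable M"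
    and Ysq: "\<And>t. integrable M (\<lambda>\<omega>. (Y t \<omega>)\<^sup>2)"
    and Ymean: "\<And>t. (\<integral>\<omega>. Y t \<omega> \<partial>M) = 0"
    and b: "b \<ge> 0"
    and smu[measurable_cong]: "sets \<mu> = sets borel"
    and mu0: "emeasure \<mu> {..0} = 0"
    and mufin: "(\<integral>\<^sup>+ x. ennreal (min x 1) \<partial>\<mu>) < \<infinity>"
begin

definition "\<sigma>2 t = (\<integral>\<omega>. (Y t \<omega>)\<^sup>2 \<partial>M)"
definition "Cv s t = (\<integral>\<omega>. Y s \<omega> * Y t \<omega> \<partial>M)"
definition "PP = PiM UNIV (\<lambda>_::nat. M)"
definition "G = measure_pmf (geometric_pmf (1/2))"
definition "pp (n::nat) = (1/2::real)^(Suc n)"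
definition "m = enn2real (\<integral>\<^sup>+ x. ennreal (min x 1) \<partial>\<mu>)"
definition "\<nu>x = (if m = 0 then return borel 1 else density \<mu> (\<lambda>x. ennreal (min x 1 / m)))"
definition "\<nu> = \<nu>x \<Otimes>\<^sub>M G"
definition "Om = \<nu> \<Otimes>\<^sub>M PP"
definition "kk (n::nat) = (if n = 0 then 1 else n)"
definition "a x n t = (if n = 0 then sqrt (2*b/pp 0) else if x \<le> 0 then 0
     else sqrt (m*(2*x)^n/(fact n * min x 1 * pp n)) * exp (-x * \<sigma>2 t))"
definition "prodY t k \<omega> = (\<Prod>i<k. Y t (\<omega> i))"
definition "Z t u = a (fst (fst u)) (snd (fst u)) t * prodY t (kk (snd (fst u))) (snd u)"

lemma YY_int: "integrable M (\<lambda>\<omega>. Y s \<omega> * Y t \<omega>)"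
proof (rule Bochner_Integration.integrable_bound)
  show "integrable M (\<lambda>\<omega>. (Y s \<omega>)\<^sup>2 + (Y t \<omega>)\<^sup>2)" using Ysq by auto
  show "AE x in M. norm (Y s x * Y t x) \<le> norm ((Y s x)\<^sup>2 + (Y t x)\<^sup>2)"
    by (auto intro!: AE_I2 ab_le)
qed auto

lemma Y_int: "integrable M (Y t)"
proof (rule Bochner_Integration.integrable_bound)
  interpret prob_space M by (rule PM)
  show "integrable M (\<lambda>\<omega>. (Y t \<omega>)\<^sup>2 + 1)" using Ysq by auto
  show "AE x in M. norm (Y t x) \<le> norm ((Y t x)\<^sup>2 + 1)"
  proof (intro AE_I2)
    fix x show "norm (Y t x) \<le> norm ((Y t x)\<^sup>2 + 1)" using ab_le[of "Y t x" 1] by simp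
  qed
qed auto

lemma \<sigma>2_nonneg: "\<sigma>2 t \<ge> 0" unfolding \<sigma>2_def by auto

lemma Cv_diag: "Cv t t = \<sigma>2 t" unfolding Cv_def \<sigma>2_def by (simp add: power2_eq_square)

lemma sq_diff: "(\<integral>\<omega>. (Y s \<omega> - Y t \<omega>)\<^sup>2 \<partial>M) = \<sigma>2 s + \<sigma>2 t - 2 * Cv s t"
proof -
  have "(\<integral>\<omega>. (Y s \<omega> - Y t \<omega>)\<^sup>2 \<partial>M) = (\<integral>\<omega>. (Y s \<omega>)\<^sup>2 + (Y t \<omega>)\<^sup>2 - 2 * (Y s \<omega> * Y t \<omega>) \<partial>M)"
    by (rule Bochner_Integration.integral_cong) (auto simp: power2_eq_square algebra_simps)
  also have "\<dots> = \<sigma>2 s + \<sigma>2 t - 2 * Cv s t"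
    unfolding \<sigma>2_def Cv_def
    by (subst Bochner_Integration.integral_diff, (intro Bochner_Integration.integrable_add integrable_mult_right Ysq YY_int)+)
       (subst Bochner_Integration.integral_add, (intro Ysq)+, simp)
  finally show ?thesis .
qed

lemma d_nonneg: "\<sigma>2 s + \<sigma>2 t - 2 * Cv s t \<ge> 0"
  unfolding sq_diff[symmetric] by (rule integral_nonneg_AE) auto

lemma Pi_ZZ:
  shows "integrable PP (\<lambda>\<omega>. Z s (u,\<omega>) * Z t (u,\<omega>))"
    and "(\<integral>\<omega>. Z s (u,\<omega>) * Z t (u,\<omega>) \<partial>PP) =
          a (fst u) (snd u) s * a (fst u) (snd u) t * Cv s t ^ kk (snd u)"
proof -
  have eq: "Z s (u,\<omega>) * Z t (u,\<omega>) = (a (fst u) (snd u) s * a (fst u) (snd u) t) *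
      (\<Prod>i<kk (snd u). Y s (\<omega> i) * Y t (\<omega> i))" for \<omega>
    by (simp add: Z_def prodY_def prod.distrib)
  show "integrable PP (\<lambda>\<omega>. Z s (u,\<omega>) * Z t (u,\<omega>))"
    unfolding eq PP_def by (intro integrable_mult_right prodint(1)[OF PM YY_int])
  show "(\<integral>\<omega>. Z s (u,\<omega>) * Z t (u,\<omega>) \<partial>PP) =
          a (fst u) (snd u) s * a (fst u) (snd u) t * Cv s t ^ kk (snd u)"
    unfolding eq PP_def Cv_def using prodint(2)[OF PM YY_int] by simp
qed

lemma Pi_Z:
  shows "integrable PP (\<lambda>\<omega>. Z t (u,\<omega>))"
    and "(\<integral>\<omega>. Z t (u,\<omega>) \<partial>PP) = 0"
proof -
  show "integrable PP (\<lambda>\<omega>. Z t (u,\<omega>))"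
    unfolding Z_def prodY_def PP_def prod.sel by (intro integrable_mult_right prodint(1)[OF PM Y_int])
  have "kk (snd u) \<noteq> 0" by (simp add: kk_def)
  then show "(\<integral>\<omega>. Z t (u,\<omega>) \<partial>PP) = 0"
    unfolding Z_def prodY_def PP_def using prodint(2)[OF PM Y_int] Ymean by simp
qed


definition "W S C x = (if 0 < x then exp (-x*S) * (exp (2*x*C) - 1) / min x 1 else 0)"

lemma pp_pos: "pp n > 0" by (simp add: pp_def)

lemma pmf_G: "pmf (geometric_pmf (1/2)) n = pp n"
  by (simp add: pp_def)

lemma a_nonneg: "a x n t \<ge> 0"
proof -
  have "0 \<le> m*(2*x)^n/(fact n * min x 1 * pp n)" if "0 < x"
    using that pp_pos[of n] by (intro divide_nonneg_pos mult_nonneg_nonneg mult_pos_pos) (auto simp: m_def)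
  then show ?thesis using b pp_pos[of 0] by (auto simp: a_def)
qed

lemma ser:
  "(\<lambda>n. pp n * (a x n s * a x n t * C ^ kk n)) sums (2*b*C + m * W (\<sigma>2 s + \<sigma>2 t) C x)"
proof (cases "0 < x")
  case False
  have "(\<lambda>n. pp n * (a x n s * a x n t * C ^ kk n)) = (\<lambda>n. if n = 0 then 2*b*C else 0)"
    using False b pp_pos[of 0] by (auto simp: a_def kk_def fun_eq_iff)
  then show ?thesis using False sums_single[of 0 "\<lambda>_. 2*b*C"] by (simp add: W_def)
next
  case True
  define K where "K = m / min x 1 * exp (-x*(\<sigma>2 s + \<sigma>2 t))"
  have m0: "m \<ge> 0" by (simp add: m_def)
  have eq: "pp n * (a x n s * a x n t * C ^ kk n) =
      K * ((2*x*C)^n /\<^sub>R fact n) + (if n = 0 then 2*b*C - K else 0)" for n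
  proof (cases "n = 0")
    case True then show ?thesis using b pp_pos[of 0] by (simp add: a_def kk_def)
  next
    case False
    define q where "q = m*(2*x)^n/(fact n * min x 1 * pp n)"
    have qn: "0 \<le> q" unfolding q_def
      using True pp_pos[of n] m0 by (intro divide_nonneg_pos mult_nonneg_nonneg mult_pos_pos) auto
    have as: "a x n r = sqrt q * exp (-x * \<sigma>2 r)" for r
      using False True by (simp add: a_def q_def)
    have "pp n * (a x n s * a x n t * C ^ kk n) =
       pp n * (sqrt q * sqrt q) * (exp (-x * \<sigma>2 s) * exp (-x * \<sigma>2 t)) * C ^ n"
      using False by (simp only: as kk_def mult_ac if_False)
    also have "\<dots> = pp n * q * (exp (-x * \<sigma>2 s) * exp (-x * \<sigma>2 t)) * C ^ n"
      using qn by simp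
    also have "\<dots> = K * ((2*x*C)^n / fact n)"
      unfolding q_def K_def using pp_pos[of n] True
      by (simp add: exp_add[symmetric] power_mult_distrib field_simps)
    finally show ?thesis using False by (simp add: divide_inverse mult_ac)
  qed
  have "(\<lambda>n. K * ((2*x*C)^n /\<^sub>R fact n) + (if n = 0 then 2*b*C - K else 0)) sums
        (K * exp (2*x*C) + (2*b*C - K))"
    by (intro sums_add sums_mult exp_converges) (rule sums_single)
  moreover have "K * exp (2*x*C) + (2*b*C - K) = 2*b*C + m * W (\<sigma>2 s + \<sigma>2 t) C x"
    using True by (simp add: W_def K_def field_simps)
  ultimately show ?thesis unfolding eq by simp
qed

lemma G_sums:
  fixes h :: "nat \<Rightarrow> real"
  assumes "(\<lambda>n. pp n * h n) sums V" "summable (\<lambda>n. pp n * \<bar>h n\<bar>)"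
  shows "integrable G h" "integral\<^sup>L G h = V"
proof -
  have pmf: "pmf (geometric_pmf (1/2)) = pp" using pmf_G by auto
  have G: "G = density (count_space UNIV) pp"
    unfolding G_def measure_pmf_eq_density pmf ..
  have ic: "integrable (count_space UNIV) (\<lambda>n. pp n * h n)"
    unfolding integrable_count_space_nat_iff using assms(2) pp_pos
    by (simp add: abs_mult less_imp_le)
  show "integrable G h" unfolding G
    by (subst integrable_density) (use ic pp_pos in \<open>auto simp: less_imp_le\<close>)
  show "integral\<^sup>L G h = V" unfolding G
    by (subst integral_density) (use ic pp_pos assms(1) in \<open>auto simp: less_imp_le integral_count_space_nat sums_iff\<close>)
qed

lemma m_eq: "ennreal m = (\<integral>\<^sup>+x. ennreal (min x 1) \<partial>\<mu>)"
  unfolding m_def using mufin by (intro ennreal_enn2real) auto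

lemma m_nonneg: "m \<ge> 0" by (simp add: m_def)

lemma AE_pos: "AE x in \<mu>. 0 < x"
proof (rule AE_I')
  show "{..0::real} \<in> null_sets \<mu>" using mu0 by (simp add: null_sets_def smu)
  show "{x \<in> space \<mu>. \<not> 0 < x} \<subseteq> {..0}" by auto
qed

lemma bern_int:
  assumes l: "l \<ge> 0"
  shows "integrable \<mu> (\<lambda>x. 1 - exp (-x*l))"
proof (rule integrableI_bounded)
  show "(\<lambda>x. 1 - exp (-x*l)) \<in> borel_measurable \<mu>" by measurable
  have pw: "\<bar>1 - exp (-x*l)\<bar> \<le> max l 1 * min x 1" if x: "0 < x" for x
  proof -
    have e1: "exp (-x*l) \<le> 1" using x l by (simp add: mult_nonneg_nonneg)
    have e2: "1 - x*l \<le> exp (-x*l)" using exp_ge_add_one_self[of "-x*l"] by simp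
    show ?thesis
    proof (cases "x \<le> 1")
      case True
      have "x*l \<le> max l 1 * x" using x by (simp add: mult.commute mult_left_mono)
      then show ?thesis using True e1 e2 by simp
    next
      case False
      have "\<bar>1 - exp (-x*l)\<bar> \<le> 1" using e1 exp_gt_zero[of "-x*l"] by simp
      moreover have "1 \<le> max l 1 * min x 1" using False by simp
      ultimately show ?thesis by linarith
    qed
  qed
  have "(\<integral>\<^sup>+x. ennreal (norm (1 - exp (-x*l))) \<partial>\<mu>) \<le> (\<integral>\<^sup>+x. ennreal (max l 1) * ennreal (min x 1) \<partial>\<mu>)"
  proof (intro nn_integral_mono_AE)
    show "AE x in \<mu>. ennreal (norm (1 - exp (-x*l))) \<le> ennreal (max l 1) * ennreal (min x 1)"
      using AE_pos
    proof eventually_elim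
      case (elim x)
      then show ?case using pw[OF elim] by (simp add: ennreal_mult[symmetric] ennreal_leI)
    qed
  qed
  also have "\<dots> = ennreal (max l 1) * (\<integral>\<^sup>+x. ennreal (min x 1) \<partial>\<mu>)"
    by (rule nn_integral_cmult) auto
  also have "\<dots> < \<infinity>" using mufin by (simp add: ennreal_mult_less_top)
  finally show "(\<integral>\<^sup>+x. ennreal (norm (1 - exp (-x*l))) \<partial>\<mu>) < \<infinity>" .
qed


lemma prob_\<nu>x: "prob_space \<nu>x"
proof (cases "m = 0")
  case True then show ?thesis by (simp add: \<nu>x_def prob_space_return)
next
  case False
  with m_nonneg have mp: "0 < m" by simp
  have "emeasure (density \<mu> (\<lambda>x. ennreal (min x 1 / m))) (space \<mu>) = (\<integral>\<^sup>+x. ennreal (min x 1 / m) \<partial>\<mu>)"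
    by (subst emeasure_density) (auto intro!: nn_integral_cong simp: indicator_def)
  also have "\<dots> = (\<integral>\<^sup>+x. ennreal (min x 1) * ennreal (1/m) \<partial>\<mu>)"
    using mp by (intro nn_integral_cong) (simp add: ennreal_mult''[symmetric])
  also have "\<dots> = (\<integral>\<^sup>+x. ennreal (min x 1) \<partial>\<mu>) * ennreal (1/m)"
    by (rule nn_integral_multc) auto
  also have "\<dots> = 1"
    unfolding m_eq[symmetric] using mp by (simp add: ennreal_mult[symmetric])
  finally show ?thesis using False unfolding \<nu>x_def by (intro prob_spaceI) simp
qed

lemma mu_triv: assumes "m = 0" shows "AE x in \<mu>. False"
proof -
  have "(\<integral>\<^sup>+x. ennreal (min x 1) \<partial>\<mu>) = 0" using m_eq assms by simp
  then have "AE x in \<mu>. ennreal (min x 1) = 0"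
    by (subst (asm) nn_integral_0_iff_AE) auto
  then show ?thesis using AE_pos by eventually_elim auto
qed

lemma X_lemma:
  assumes S: "0 \<le> S" and d: "0 \<le> S - 2*C"
  shows "integrable \<nu>x (\<lambda>x. m * W S C x)"
    and "(\<integral>x. m * W S C x \<partial>\<nu>x) = (\<integral>x. 1 - exp (-x*S) \<partial>\<mu>) - (\<integral>x. 1 - exp (-x*(S-2*C)) \<partial>\<mu>)"
proof -
  have Wm[measurable]: "(\<lambda>x. m * W S C x) \<in> borel_measurable \<mu>"
    unfolding W_def by measurable
  have Wm'[measurable]: "(\<lambda>x. m * W S C x) \<in> borel_measurable borel"
    unfolding W_def by measurable
  have "integrable \<nu>x (\<lambda>x. m * W S C x) \<and>
     (\<integral>x. m * W S C x \<partial>\<nu>x) = (\<integral>x. 1 - exp (-x*S) \<partial>\<mu>) - (\<integral>x. 1 - exp (-x*(S-2*C)) \<partial>\<mu>)"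
  proof (cases "m = 0")
    case True
    have "(\<integral>x. 1 - exp (-x*S) \<partial>\<mu>) = (\<integral>x. 0 \<partial>\<mu>)"
      using mu_triv[OF True] by (intro integral_cong_AE) (auto elim: eventually_mono)
    moreover have "(\<integral>x. 1 - exp (-x*(S-2*C)) \<partial>\<mu>) = (\<integral>x. 0 \<partial>\<mu>)"
      using mu_triv[OF True] by (intro integral_cong_AE) (auto elim: eventually_mono)
    ultimately show ?thesis using True by simp
  next
    case False
    with m_nonneg have mp: "0 < m" by simp
    have nx: "\<nu>x = density \<mu> (\<lambda>x. ennreal (min x 1 / m))" using False by (simp add: \<nu>x_def)
    have gm: "(\<lambda>x. min x 1 / m) \<in> borel_measurable \<mu>" by measurable
    have gn: "AE x in \<mu>. 0 \<le> min x 1 / m" using AE_pos by eventually_elim (use mp in auto)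
    have pw: "AE x in \<mu>. min x 1 / m * (m * W S C x) = (1 - exp (-x*S)) - (1 - exp (-x*(S-2*C)))"
      using AE_pos
    proof eventually_elim
      case (elim x)
      have "exp (-x*S) * exp (2*x*C) = exp (-x*(S-2*C))" by (simp add: exp_add[symmetric] algebra_simps)
      then show ?case using elim mp by (simp add: W_def field_simps)
    qed
    have i2: "integrable \<mu> (\<lambda>x. (1 - exp (-x*S)) - (1 - exp (-x*(S-2*C))))"
      by (intro Bochner_Integration.integrable_diff bern_int S d)
    have m1: "(\<lambda>x. min x 1 / m * (m * W S C x)) \<in> borel_measurable \<mu>"
      using gm Wm by (rule borel_measurable_times)
    have m2: "(\<lambda>x. (1 - exp (-x*S)) - (1 - exp (-x*(S-2*C)))) \<in> borel_measurable \<mu>"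
      by measurable
    have i1: "integrable \<mu> (\<lambda>x. min x 1 / m * (m * W S C x))"
      using integrable_cong_AE[OF m1 m2 pw] i2 by blast
    show ?thesis unfolding nx
    proof
      show "integrable (density \<mu> (\<lambda>x. ennreal (min x 1 / m))) (\<lambda>x. m * W S C x)"
        by (subst integrable_density[OF Wm gm gn]) (simp only: real_scaleR_def i1)
      have "(\<integral>x. m * W S C x \<partial>density \<mu> (\<lambda>x. ennreal (min x 1 / m))) =
          (\<integral>x. min x 1 / m * (m * W S C x) \<partial>\<mu>)"
        by (subst integral_density[OF Wm gm gn]) simp
      also have "\<dots> = (\<integral>x. (1 - exp (-x*S)) - (1 - exp (-x*(S-2*C))) \<partial>\<mu>)"
        by (rule integral_cong_AE[OF m1 m2 pw])
      also have "\<dots> = (\<integral>x. 1 - exp (-x*S) \<partial>\<mu>) - (\<integral>x. 1 - exp (-x*(S-2*C)) \<partial>\<mu>)"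
        by (intro Bochner_Integration.integral_diff bern_int S d)
      finally show "(\<integral>x. m * W S C x \<partial>density \<mu> (\<lambda>x. ennreal (min x 1 / m))) =
          (\<integral>x. 1 - exp (-x*S) \<partial>\<mu>) - (\<integral>x. 1 - exp (-x*(S-2*C)) \<partial>\<mu>)" .
    qed
  qed
  then show "integrable \<nu>x (\<lambda>x. m * W S C x)"
    and "(\<integral>x. m * W S C x \<partial>\<nu>x) = (\<integral>x. 1 - exp (-x*S) \<partial>\<mu>) - (\<integral>x. 1 - exp (-x*(S-2*C)) \<partial>\<mu>)"
    by auto
qed

lemma sets_\<nu>x[measurable_cong]: "sets \<nu>x = sets borel" by (simp add: \<nu>x_def smu)
lemma sets_G[measurable_cong]: "sets G = sets (count_space UNIV)" by (simp add: G_def)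
lemma prob_G: "prob_space G" by (simp add: G_def measure_pmf.prob_space_axioms)
lemma prob_PP: "prob_space PP" unfolding PP_def by (rule prob_space_PiM) (rule PM)
lemma pps1: "pair_prob_space \<nu>x G"
  unfolding pair_prob_space_def pair_sigma_finite_def using prob_\<nu>x prob_G
  by (auto intro: prob_space_imp_sigma_finite)
lemma prob_\<nu>: "prob_space \<nu>" unfolding \<nu>_def by (intro prob_space_pair prob_\<nu>x prob_G)
lemma pps2: "pair_prob_space \<nu> PP"
  unfolding pair_prob_space_def pair_sigma_finite_def using prob_\<nu> prob_PP
  by (auto intro: prob_space_imp_sigma_finite)
lemma prob_Om: "prob_space Om" unfolding Om_def by (intro prob_space_pair prob_\<nu> prob_PP)

lemma a_meas[measurable]: "(\<lambda>x. a x n t) \<in> borel_measurable borel"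
  unfolding a_def by measurable

lemma aa_meas: "(\<lambda>u. a (fst u) (snd u) s * a (fst u) (snd u) t * C ^ kk (snd u)) \<in> borel_measurable \<nu>"
proof -
  have "(\<lambda>u. (\<lambda>n u. a (fst u) n s * a (fst u) n t * C ^ kk n) (snd u) u) \<in> borel_measurable \<nu>"
    by (rule measurable_compose_countable) (unfold \<nu>_def, measurable)
  then show ?thesis by simp
qed

lemma Z_meas[measurable]: "Z t \<in> borel_measurable Om"
proof -
  have "(\<lambda>w. (\<lambda>n w. a (fst (fst w)) n t * (\<Prod>i<kk n. Y t (snd w i))) (snd (fst w)) w) \<in> borel_measurable Om"
    by (rule measurable_compose_countable) (unfold Om_def \<nu>_def PP_def, measurable)
  moreover have "Z t = (\<lambda>w. a (fst (fst w)) (snd (fst w)) t * (\<Prod>i<kk (snd (fst w)). Y t (snd w i)))"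
    by (simp add: fun_eq_iff Z_def prodY_def)
  ultimately show ?thesis by simp
qed


lemma ser_abs:
  "summable (\<lambda>n. pp n * \<bar>a x n s * a x n t * C ^ kk n\<bar>)"
proof -
  have "(\<lambda>n. pp n * \<bar>a x n s * a x n t * C ^ kk n\<bar>) = (\<lambda>n. pp n * (a x n s * a x n t * \<bar>C\<bar> ^ kk n))"
    using a_nonneg by (simp add: abs_mult power_abs)
  then show ?thesis using ser[of x s t "\<bar>C\<bar>"] by (simp add: sums_iff)
qed

lemma \<nu>_int:
  assumes "2*\<bar>C\<bar> \<le> \<sigma>2 s + \<sigma>2 t"
  shows "integrable \<nu> (\<lambda>u. a (fst u) (snd u) s * a (fst u) (snd u) t * C ^ kk (snd u))"
proof -
  interpret pair_prob_space \<nu>x G by (rule pps1)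
  have "integrable (\<nu>x \<Otimes>\<^sub>M G) (\<lambda>u. a (fst u) (snd u) s * a (fst u) (snd u) t * C ^ kk (snd u))"
  proof (rule Fubini_integrable)
    show "(\<lambda>u. a (fst u) (snd u) s * a (fst u) (snd u) t * C ^ kk (snd u)) \<in> borel_measurable (\<nu>x \<Otimes>\<^sub>M G)"
      using aa_meas by (simp add: \<nu>_def)
    have eq: "(\<integral>n. \<bar>a x n s * a x n t * C ^ kk n\<bar> \<partial>G) = 2*b*\<bar>C\<bar> + m * W (\<sigma>2 s + \<sigma>2 t) \<bar>C\<bar> x" for x
    proof -
      have "(\<lambda>n. \<bar>a x n s * a x n t * C ^ kk n\<bar>) = (\<lambda>n. a x n s * a x n t * \<bar>C\<bar> ^ kk n)"
        using a_nonneg by (simp add: abs_mult power_abs)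
      then show ?thesis using G_sums(2)[OF ser ser_abs] by simp
    qed
    have "integrable \<nu>x (\<lambda>x. 2*b*\<bar>C\<bar> + m * W (\<sigma>2 s + \<sigma>2 t) \<bar>C\<bar> x)"
      using assms \<sigma>2_nonneg[of s] \<sigma>2_nonneg[of t]
      by (intro Bochner_Integration.integrable_add X_lemma(1) finite_measure.integrable_const
          prob_space.finite_measure prob_\<nu>x) auto
    then show "integrable \<nu>x (\<lambda>x. \<integral>n. norm (a (fst (x, n)) (snd (x, n)) s * a (fst (x, n)) (snd (x, n)) t * C ^ kk (snd (x, n))) \<partial>G)"
      by (simp add: eq)
    show "AE x in \<nu>x. integrable G (\<lambda>n. a (fst (x, n)) (snd (x, n)) s * a (fst (x, n)) (snd (x, n)) t * C ^ kk (snd (x, n)))"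
      using G_sums(1)[OF ser ser_abs] by simp
  qed
  then show ?thesis by (simp add: \<nu>_def)
qed

lemma \<nu>_integral:
  assumes int: "integrable \<nu> (\<lambda>u. a (fst u) (snd u) s * a (fst u) (snd u) t * C ^ kk (snd u))"
    and d: "0 \<le> \<sigma>2 s + \<sigma>2 t - 2*C"
  shows "(\<integral>u. a (fst u) (snd u) s * a (fst u) (snd u) t * C ^ kk (snd u) \<partial>\<nu>) =
     2*b*C + ((\<integral>x. 1 - exp (-x*(\<sigma>2 s + \<sigma>2 t)) \<partial>\<mu>) - (\<integral>x. 1 - exp (-x*(\<sigma>2 s + \<sigma>2 t - 2*C)) \<partial>\<mu>))"
proof -
  interpret pair_prob_space \<nu>x G by (rule pps1)
  interpret X: prob_space \<nu>x by (rule prob_\<nu>x)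
  have S: "0 \<le> \<sigma>2 s + \<sigma>2 t" using \<sigma>2_nonneg[of s] \<sigma>2_nonneg[of t] by simp
  have "(\<integral>u. a (fst u) (snd u) s * a (fst u) (snd u) t * C ^ kk (snd u) \<partial>\<nu>) =
      (\<integral>x. (\<integral>n. a x n s * a x n t * C ^ kk n \<partial>G) \<partial>\<nu>x)"
    using integral_fst'[of "\<lambda>u. a (fst u) (snd u) s * a (fst u) (snd u) t * C ^ kk (snd u)"] int
    by (simp add: \<nu>_def)
  also have "\<dots> = (\<integral>x. 2*b*C + m * W (\<sigma>2 s + \<sigma>2 t) C x \<partial>\<nu>x)"
    using G_sums(2)[OF ser ser_abs] by simp
  also have "\<dots> = (\<integral>x. 2*b*C \<partial>\<nu>x) + (\<integral>x. m * W (\<sigma>2 s + \<sigma>2 t) C x \<partial>\<nu>x)"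
    by (rule Bochner_Integration.integral_add[OF finite_measure.integrable_const[OF prob_space.finite_measure[OF prob_\<nu>x]] X_lemma(1)[OF S d]])
  also have "\<dots> = 2*b*C + (\<integral>x. m * W (\<sigma>2 s + \<sigma>2 t) C x \<partial>\<nu>x)"
    by (simp add: prob_space.prob_space[OF prob_\<nu>x])
  also have "\<dots> = 2*b*C + ((\<integral>x. 1 - exp (-x*(\<sigma>2 s + \<sigma>2 t)) \<partial>\<mu>) - (\<integral>x. 1 - exp (-x*(\<sigma>2 s + \<sigma>2 t - 2*C)) \<partial>\<mu>))"
    unfolding X_lemma(2)[OF S d] ..
  finally show ?thesis .
qed

lemma Z_sq_int: "integrable Om (\<lambda>w. (Z t w)\<^sup>2)"
proof -
  interpret N: pair_prob_space \<nu> PP by (rule pps2)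
  have "integrable (\<nu> \<Otimes>\<^sub>M PP) (\<lambda>w. (Z t w)\<^sup>2)"
  proof (rule N.Fubini_integrable)
    show "(\<lambda>w. (Z t w)\<^sup>2) \<in> borel_measurable (\<nu> \<Otimes>\<^sub>M PP)"
      using Z_meas[of t] unfolding Om_def by measurable
    have eq: "(\<integral>\<omega>. norm ((Z t (u,\<omega>))\<^sup>2) \<partial>PP) = a (fst u) (snd u) t * a (fst u) (snd u) t * Cv t t ^ kk (snd u)" for u
      using Pi_ZZ(2)[of t u t] by (simp add: power2_eq_square)
    have "integrable \<nu> (\<lambda>u. a (fst u) (snd u) t * a (fst u) (snd u) t * Cv t t ^ kk (snd u))"
      by (rule \<nu>_int) (simp add: Cv_diag \<sigma>2_nonneg)
    then show "integrable \<nu> (\<lambda>u. \<integral>\<omega>. norm ((Z t (u,\<omega>))\<^sup>2) \<partial>PP)" by (simp only: eq)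
    show "AE u in \<nu>. integrable PP (\<lambda>\<omega>. (Z t (u,\<omega>))\<^sup>2)"
      using Pi_ZZ(1)[of t _ t] by (simp add: power2_eq_square)
  qed
  then show ?thesis by (simp add: Om_def)
qed

lemma Z_int: "integrable Om (Z t)"
proof (rule Bochner_Integration.integrable_bound)
  show "integrable Om (\<lambda>w. (Z t w)\<^sup>2 + 1)"
    using Z_sq_int prob_space.finite_measure[OF prob_Om]
    by (intro Bochner_Integration.integrable_add finite_measure.integrable_const) auto
  show "AE x in Om. norm (Z t x) \<le> norm ((Z t x)\<^sup>2 + 1)"
  proof (intro AE_I2)
    fix x show "norm (Z t x) \<le> norm ((Z t x)\<^sup>2 + 1)" using ab_le[of "Z t x" 1] by simp
  qed
qed auto

lemma Om_Z: "(\<integral>w. Z t w \<partial>Om) = 0"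
proof -
  interpret N: pair_prob_space \<nu> PP by (rule pps2)
  have "(\<integral>w. Z t w \<partial>Om) = (\<integral>u. (\<integral>\<omega>. Z t (u,\<omega>) \<partial>PP) \<partial>\<nu>)"
    using N.integral_fst'[of "Z t"] Z_int[of t] by (simp add: Om_def)
  also have "\<dots> = 0" by (simp add: Pi_Z)
  finally show ?thesis .
qed

lemma Om_ZZ: "(\<integral>w. Z s w * Z t w \<partial>Om) =
   2*b*Cv s t + ((\<integral>x. 1 - exp (-x*(\<sigma>2 s + \<sigma>2 t)) \<partial>\<mu>) - (\<integral>x. 1 - exp (-x*(\<sigma>2 s + \<sigma>2 t - 2*Cv s t)) \<partial>\<mu>))"
proof -
  interpret N: pair_prob_space \<nu> PP by (rule pps2)
  have int: "integrable (\<nu> \<Otimes>\<^sub>M PP) (\<lambda>w. Z s w * Z t w)"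
  proof (rule Bochner_Integration.integrable_bound)
    show "integrable (\<nu> \<Otimes>\<^sub>M PP) (\<lambda>w. (Z s w)\<^sup>2 + (Z t w)\<^sup>2)"
      using Z_sq_int[of s] Z_sq_int[of t] unfolding Om_def by auto
    show "AE x in \<nu> \<Otimes>\<^sub>M PP. norm (Z s x * Z t x) \<le> norm ((Z s x)\<^sup>2 + (Z t x)\<^sup>2)"
      by (auto intro!: AE_I2 ab_le)
    show "(\<lambda>w. Z s w * Z t w) \<in> borel_measurable (\<nu> \<Otimes>\<^sub>M PP)"
      using Z_meas[of s] Z_meas[of t] unfolding Om_def by measurable
  qed
  have eq: "(\<integral>\<omega>. Z s (u,\<omega>) * Z t (u,\<omega>) \<partial>PP) = a (fst u) (snd u) s * a (fst u) (snd u) t * Cv s t ^ kk (snd u)" for u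
    by (rule Pi_ZZ(2))
  have i\<nu>: "integrable \<nu> (\<lambda>u. a (fst u) (snd u) s * a (fst u) (snd u) t * Cv s t ^ kk (snd u))"
    using N.integrable_fst'[OF int] by (simp only: eq)
  have "(\<integral>w. Z s w * Z t w \<partial>Om) = (\<integral>u. (\<integral>\<omega>. Z s (u,\<omega>) * Z t (u,\<omega>) \<partial>PP) \<partial>\<nu>)"
    using N.integral_fst'[OF int] by (simp add: Om_def)
  also have "\<dots> = (\<integral>u. a (fst u) (snd u) s * a (fst u) (snd u) t * Cv s t ^ kk (snd u) \<partial>\<nu>)"
    by (simp only: eq)
  also have "\<dots> = 2*b*Cv s t + ((\<integral>x. 1 - exp (-x*(\<sigma>2 s + \<sigma>2 t)) \<partial>\<mu>) - (\<integral>x. 1 - exp (-x*(\<sigma>2 s + \<sigma>2 t - 2*Cv s t)) \<partial>\<mu>))"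
    by (rule \<nu>_integral[OF i\<nu> d_nonneg])
  finally show ?thesis .
qed


lemma main:
  "\<exists>(N :: (real \<Rightarrow> real) measure) (Zf :: real \<Rightarrow> (real \<Rightarrow> real) \<Rightarrow> real).
     prob_space N \<and>
     (\<forall>t. Zf t \<in> borel_measurable N \<and> integrable N (\<lambda>\<omega>. (Zf t \<omega>)\<^sup>2)) \<and>
     (\<forall>s t. cov_fun N Zf s t = 2*b*Cv s t + ((\<integral>x. 1 - exp (-x*(\<sigma>2 s + \<sigma>2 t)) \<partial>\<mu>) -
         (\<integral>x. 1 - exp (-x*(\<sigma>2 s + \<sigma>2 t - 2*Cv s t)) \<partial>\<mu>)))"
proof -
  define F where "F = (\<lambda>w (t::real). Z t w)"
  define N where "N = distr Om (PiM UNIV (\<lambda>_::real. borel)) F"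
  have Fm: "F \<in> measurable Om (PiM UNIV (\<lambda>_::real. (borel :: real measure)))"
    unfolding F_def by (rule measurable_PiM_single') (auto intro: Z_meas)
  have comp: "(\<lambda>g. g t) \<in> borel_measurable (PiM UNIV (\<lambda>_::real. (borel :: real measure)))" for t
    by (rule measurable_component_singleton) simp
  have comp2: "(\<lambda>g. (g t)\<^sup>2) \<in> borel_measurable (PiM UNIV (\<lambda>_::real. (borel :: real measure)))" for t
    using comp[of t] by measurable
  have comp3: "(\<lambda>g. (g s - c) * (g t - d)) \<in> borel_measurable (PiM UNIV (\<lambda>_::real. (borel :: real measure)))" for s t c d
    using comp[of s] comp[of t] by measurable
  have sN: "sets N = sets (PiM UNIV (\<lambda>_::real. (borel :: real measure)))" by (simp add: N_def)
  have PN: "prob_space N" unfolding N_def by (rule prob_space.prob_space_distr[OF prob_Om Fm])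
  have m1: "(\<lambda>g. g t) \<in> borel_measurable N" for t
    using comp[of t] by (simp add: measurable_cong_sets[OF sN refl])
  have i1: "integrable N (\<lambda>g. (g t)\<^sup>2)" for t
    unfolding N_def integrable_distr_eq[OF Fm comp2] by (simp add: F_def Z_sq_int)
  have e1: "(\<integral>g. g t \<partial>N) = 0" for t
    unfolding N_def integral_distr[OF Fm comp] by (simp add: F_def Om_Z)
  have c1: "cov_fun N (\<lambda>t g. g t) s t = 2*b*Cv s t + ((\<integral>x. 1 - exp (-x*(\<sigma>2 s + \<sigma>2 t)) \<partial>\<mu>) -
         (\<integral>x. 1 - exp (-x*(\<sigma>2 s + \<sigma>2 t - 2*Cv s t)) \<partial>\<mu>))" for s t
  proof -
    have "cov_fun N (\<lambda>t g. g t) s t = (\<integral>g. (g s - 0) * (g t - 0) \<partial>N)"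
      unfolding cov_fun_def e1 ..
    also have "\<dots> = (\<integral>w. Z s w * Z t w \<partial>Om)"
      unfolding N_def integral_distr[OF Fm comp3] by (simp add: F_def)
    finally show ?thesis using Om_ZZ by simp
  qed
  show ?thesis
    by (rule exI[of _ N], rule exI[of _ "\<lambda>t g. g t"]) (use PN m1 i1 c1 in auto)
qed

end

theorem proposition2p1:
  fixes M :: "'a measure" and Y :: "real \<Rightarrow> 'a \<Rightarrow> real" and f :: "real \<Rightarrow> real"
  assumes "prob_space M"
    and "\<And>t. Y t \<in> borel_measurable M"
    and "\<And>t. integrable M (\<lambda>\<omega>. (Y t \<omega>)\<^sup>2)"
    and "\<And>t. (\<integral>\<omega>. Y t \<omega> \<partial>M) = 0"
    and "stationary_increments M Y"
    and "bernstein_function f"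
  shows "\<exists>(N :: (real \<Rightarrow> real) measure) (Z :: real \<Rightarrow> (real \<Rightarrow> real) \<Rightarrow> real).
           prob_space N \<and>
           (\<forall>t. Z t \<in> borel_measurable N \<and> integrable N (\<lambda>\<omega>. (Z t \<omega>)\<^sup>2)) \<and>
           (\<forall>s t. cov_fun N Z s t =
              f ((\<integral>\<omega>. (Y s \<omega>)\<^sup>2 \<partial>M) + (\<integral>\<omega>. (Y t \<omega>)\<^sup>2 \<partial>M))
              - f (\<integral>\<omega>. (Y (s - t) \<omega>)\<^sup>2 \<partial>M))"
proof -
  from assms(6)[unfolded bernstein_function_def] obtain a0 b \<mu> where
    H: "a0 \<ge> 0 \<and> b \<ge> 0 \<and> sets \<mu> = sets (borel :: real measure) \<and> emeasure \<mu> {..0} = 0 \<and>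
        (\<integral>\<^sup>+ x. ennreal (min x 1) \<partial>\<mu>) < \<infinity> \<and>
        (\<forall>l\<ge>0. f l = a0 + b * l + (\<integral>x. (1 - exp (- x * l)) \<partial>\<mu>))"
    by (elim exE) (erule that)
  have b: "b \<ge> 0" and smu: "sets \<mu> = sets (borel :: real measure)"
    and mu0: "emeasure \<mu> {..0} = 0" and mufin: "(\<integral>\<^sup>+ x. ennreal (min x 1) \<partial>\<mu>) < \<infinity>"
    and fl: "\<And>l. l \<ge> 0 \<Longrightarrow> f l = a0 + b * l + (\<integral>x. (1 - exp (- x * l)) \<partial>\<mu>)"
    using H by auto
  interpret bsetup M Y b \<mu>
    by (rule bsetup.intro) (rule assms(1), rule assms(2), rule assms(3), rule assms(4), rule b, rule smu, rule mu0, rule mufin)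
  have st: "(\<integral>\<omega>. (Y (s - t) \<omega>)\<^sup>2 \<partial>M) = \<sigma>2 s + \<sigma>2 t - 2 * Cv s t" for s t
  proof -
    have D: "distr M (PiM {s-t} (\<lambda>_. borel)) (\<lambda>\<omega>. \<lambda>j\<in>{s-t}. Y (j + t) \<omega> - Y t \<omega>) =
        distr M (PiM {s-t} (\<lambda>_. borel)) (\<lambda>\<omega>. \<lambda>j\<in>{s-t}. Y j \<omega>)"
      using assms(5) unfolding stationary_increments_def by blast
    have g: "(\<lambda>g. (g (s-t))\<^sup>2) \<in> borel_measurable (PiM {s-t} (\<lambda>_::real. (borel :: real measure)))"
      using measurable_component_singleton[of "s-t" "{s-t}" "\<lambda>_::real. (borel :: real measure)"] by measurable
    have f1: "(\<lambda>\<omega>. \<lambda>j\<in>{s-t}. Y (j + t) \<omega> - Y t \<omega>) \<in> measurable M (PiM {s-t} (\<lambda>_::real. (borel :: real measure)))"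
      by (rule measurable_restrict) auto
    have f2: "(\<lambda>\<omega>. \<lambda>j\<in>{s-t}. Y j \<omega>) \<in> measurable M (PiM {s-t} (\<lambda>_::real. (borel :: real measure)))"
      by (rule measurable_restrict) auto
    have "(\<integral>\<omega>. (Y (s - t) \<omega>)\<^sup>2 \<partial>M) = (\<integral>g. (g (s-t))\<^sup>2 \<partial>distr M (PiM {s-t} (\<lambda>_. borel)) (\<lambda>\<omega>. \<lambda>j\<in>{s-t}. Y j \<omega>))"
      by (subst integral_distr[OF f2 g]) simp
    also have "\<dots> = (\<integral>g. (g (s-t))\<^sup>2 \<partial>distr M (PiM {s-t} (\<lambda>_. borel)) (\<lambda>\<omega>. \<lambda>j\<in>{s-t}. Y (j + t) \<omega> - Y t \<omega>))"
      unfolding D ..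
    also have "\<dots> = (\<integral>\<omega>. (Y s \<omega> - Y t \<omega>)\<^sup>2 \<partial>M)"
      by (subst integral_distr[OF f1 g]) simp
    also have "\<dots> = \<sigma>2 s + \<sigma>2 t - 2 * Cv s t" by (rule sq_diff)
    finally show ?thesis .
  qed
  obtain N :: "(real \<Rightarrow> real) measure" and Zf :: "real \<Rightarrow> (real \<Rightarrow> real) \<Rightarrow> real" where PNZ: "prob_space N \<and>
     (\<forall>t. Zf t \<in> borel_measurable N \<and> integrable N (\<lambda>\<omega>. (Zf t \<omega>)\<^sup>2)) \<and>
     (\<forall>s t. cov_fun N Zf s t = 2*b*Cv s t + ((\<integral>x. 1 - exp (-x*(\<sigma>2 s + \<sigma>2 t)) \<partial>\<mu>) -
         (\<integral>x. 1 - exp (-x*(\<sigma>2 s + \<sigma>2 t - 2*Cv s t)) \<partial>\<mu>)))"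
    using main by (elim exE) (rule that, assumption)
  note PN = conjunct1[OF PNZ]
  note ZN = conjunct1[OF conjunct2[OF PNZ]]
  note cov = conjunct2[OF conjunct2[OF PNZ]]
  have "cov_fun N Zf s t = f ((\<integral>\<omega>. (Y s \<omega>)\<^sup>2 \<partial>M) + (\<integral>\<omega>. (Y t \<omega>)\<^sup>2 \<partial>M))
              - f (\<integral>\<omega>. (Y (s - t) \<omega>)\<^sup>2 \<partial>M)" for s t
  proof -
    have S: "0 \<le> \<sigma>2 s + \<sigma>2 t" using \<sigma>2_nonneg[of s] \<sigma>2_nonneg[of t] by simp
    have f1: "f (\<sigma>2 s + \<sigma>2 t) = a0 + b * (\<sigma>2 s + \<sigma>2 t) + (\<integral>x. 1 - exp (-x*(\<sigma>2 s + \<sigma>2 t)) \<partial>\<mu>)"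
      using fl[OF S] by simp
    have f2: "f (\<sigma>2 s + \<sigma>2 t - 2 * Cv s t) = a0 + b * (\<sigma>2 s + \<sigma>2 t - 2 * Cv s t) +
        (\<integral>x. 1 - exp (-x*(\<sigma>2 s + \<sigma>2 t - 2 * Cv s t)) \<partial>\<mu>)"
      using fl[OF d_nonneg[of s t]] by simp
    show ?thesis unfolding st \<sigma>2_def[symmetric]
      using cov[rule_format, of s t] f1 f2
        right_diff_distrib[of b "\<sigma>2 s + \<sigma>2 t" "2 * Cv s t"] by linarith
  qed
  note covf = this
  show ?thesis
    apply (rule exI[of _ N], rule exI[of _ Zf])
    apply (intro conjI PN ZN allI covf)
    done
qed

end
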